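(* Let $S$ be an AG-groupoid with a left identity. Every bi-ideal of $S$ is prime if and only if every bi-ideal of $S$ is idempotent and the set of bi-ideals of $S$ is totally ordered under inclusion (for any bi-ideals $I,J$, either $I\subseteq J$ or $J\subseteq I$).
   Context: An AG-groupoid is a set $S$ with a binary operation satisfying $(ab)c=(cb)a$ for all $a,b,c\in S$. A left identity is an element $e$ with $ea=a$ for all $a\in S$. For nonempty subsets, $AB=\{ab:a\in A,b\in B\}$, $B^{2}=BB$. A bi-ideal of $S$ is a nonempty subset $B$ with $BB\subseteq B$ and $(BS)B\subseteq B$; it is idempotent if $B^{2}=B$. A bi-ideal $B$ is prime if for all bi-ideals $B_{1},B_{2}$ of $S$, $B_{1}B_{2}\subseteq B$ implies $B_{1}\subseteq B$ or $B_{2}\subseteq B$. *)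

theory Defs
  imports Main
begin

text \<open>An AG-groupoid: the carrier is the whole type 'a, with binary operation m.\<close>

definition AG_groupoid :: "('a \<Rightarrow> 'a \<Rightarrow> 'a) \<Rightarrow> bool" where
  "AG_groupoid m \<longleftrightarrow> (\<forall>a b c. m (m a b) c = m (m c b) a)"

definition left_identity :: "('a \<Rightarrow> 'a \<Rightarrow> 'a) \<Rightarrow> 'a \<Rightarrow> bool" where
  "left_identity m e \<longleftrightarrow> (\<forall>a. m e a = a)"

definition setmul :: "('a \<Rightarrow> 'a \<Rightarrow> 'a) \<Rightarrow> 'a set \<Rightarrow> 'a set \<Rightarrow> 'a set" where
  "setmul m A B = {m a b | a b. a \<in> A \<and> b \<in> B}"

definition bi_ideal :: "('a \<Rightarrow> 'a \<Rightarrow> 'a) \<Rightarrow> 'a set \<Rightarrow> bool" where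
  "bi_ideal m B \<longleftrightarrow> B \<noteq> {} \<and> setmul m B B \<subseteq> B \<and> setmul m (setmul m B UNIV) B \<subseteq> B"

definition idempotent_set :: "('a \<Rightarrow> 'a \<Rightarrow> 'a) \<Rightarrow> 'a set \<Rightarrow> bool" where
  "idempotent_set m B \<longleftrightarrow> setmul m B B = B"

definition prime_bi_ideal :: "('a \<Rightarrow> 'a \<Rightarrow> 'a) \<Rightarrow> 'a set \<Rightarrow> bool" where
  "prime_bi_ideal m B \<longleftrightarrow> bi_ideal m B \<and>
     (\<forall>B1 B2. bi_ideal m B1 \<longrightarrow> bi_ideal m B2 \<longrightarrow> setmul m B1 B2 \<subseteq> B \<longrightarrow> B1 \<subseteq> B \<or> B2 \<subseteq> B)"

end

theory Submission
  imports Defs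
begin

lemma sm_iff: "x \<in> setmul m A B \<longleftrightarrow> (\<exists>a\<in>A. \<exists>b\<in>B. x = m a b)"
  unfolding setmul_def by blast

lemma ag: "AG_groupoid m \<Longrightarrow> m (m a b) c = m (m c b) a"
  unfolding AG_groupoid_def by blast

lemma medial: assumes "AG_groupoid m" shows "m (m a b) (m c d) = m (m a c) (m b d)"
proof -
  have "m (m a b) (m c d) = m (m (m c d) b) a" using ag[OF assms, of a b "m c d"] by simp
  also have "\<dots> = m (m (m b d) c) a" using ag[OF assms, of c d b] by simp
  also have "\<dots> = m (m a c) (m b d)" using ag[OF assms, of "m b d" c a] by simp
  finally show ?thesis .
qed

lemma lid: "left_identity m e \<Longrightarrow> m e a = a"
  unfolding left_identity_def by blast

lemma paramedial: assumes "AG_groupoid m" "left_identity m e"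
  shows "m (m a b) (m c d) = m (m d c) (m b a)"
proof -
  have "m (m a b) (m c d) = m (m (m c d) b) a" using ag[OF assms(1), of a b "m c d"] by simp
  also have "m (m c d) b = m (m c d) (m e b)" using lid[OF assms(2)] by simp
  also have "\<dots> = m (m c e) (m d b)" by (rule medial[OF assms(1)])
  also have "\<dots> = m (m (m d b) e) c" using ag[OF assms(1), of c e "m d b"] by simp
  also have "m (m d b) e = m (m e b) d" using ag[OF assms(1), of d b e] by simp
  also have "\<dots> = m b d" using lid[OF assms(2)] by simp
  finally have "m (m a b) (m c d) = m (m (m b d) c) a" .
  also have "\<dots> = m (m a c) (m b d)" using ag[OF assms(1), of "m b d" c a] by simp
  also have "\<dots> = m (m e (m a c)) (m b d)" using lid[OF assms(2)] by simp
  also have "\<dots> = m (m (m b d) (m a c)) e" using ag[OF assms(1), of e "m a c" "m b d"] by simp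
  also have "m (m b d) (m a c) = m (m b a) (m d c)" by (rule medial[OF assms(1)])
  also have "m (m (m b a) (m d c)) e = m (m e (m d c)) (m b a)" using ag[OF assms(1), of "m b a" "m d c" e] by simp
  also have "\<dots> = m (m d c) (m b a)" using lid[OF assms(2)] by simp
  finally show ?thesis .
qed

lemma bi_mem:
  assumes "bi_ideal m B" "a \<in> B" "b \<in> B"
  shows "m a b \<in> B" "m (m a s) b \<in> B"
  using assms unfolding bi_ideal_def setmul_def by blast+

lemma prod_bi:
  assumes ag: "AG_groupoid m" and li: "left_identity m e"
    and I: "bi_ideal m I" and J: "bi_ideal m J"
  shows "bi_ideal m (setmul m I J)"
proof -
  obtain i j where "i \<in> I" "j \<in> J" using I J unfolding bi_ideal_def by blast
  then have "m i j \<in> setmul m I J" unfolding sm_iff by blast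
  then have ne: "setmul m I J \<noteq> {}" by blast
  have 1: "setmul m (setmul m I J) (setmul m I J) \<subseteq> setmul m I J"
  proof
    fix x assume "x \<in> setmul m (setmul m I J) (setmul m I J)"
    then obtain a b c d where abcd: "a \<in> I" "b \<in> J" "c \<in> I" "d \<in> J" "x = m (m a b) (m c d)"
      by (auto simp: sm_iff)
    then have "x = m (m a c) (m b d)" using medial[OF ag, of a b c d] by simp
    moreover have "m a c \<in> I" "m b d \<in> J" using bi_mem(1)[OF I abcd(1,3)] bi_mem(1)[OF J abcd(2,4)] by auto
    ultimately show "x \<in> setmul m I J" unfolding sm_iff by blast
  qed
  have 2: "setmul m (setmul m (setmul m I J) UNIV) (setmul m I J) \<subseteq> setmul m I J"
  proof
    fix x assume "x \<in> setmul m (setmul m (setmul m I J) UNIV) (setmul m I J)"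
    then obtain a b c d s where abcd: "a \<in> I" "b \<in> J" "c \<in> I" "d \<in> J" "x = m (m (m a b) s) (m c d)"
      by (auto simp: sm_iff)
    have "m (m a b) s = m (m a b) (m e s)" using lid[OF li] by simp
    also have "\<dots> = m (m a e) (m b s)" by (rule medial[OF ag])
    finally have eq: "m (m a b) s = m (m a e) (m b s)" .
    have "x = m (m (m a e) (m b s)) (m c d)" using abcd(5) unfolding eq .
    also have "\<dots> = m (m (m a e) c) (m (m b s) d)" by (rule medial[OF ag])
    finally have xx: "x = m (m (m a e) c) (m (m b s) d)" .
    have "m (m a e) c \<in> I" "m (m b s) d \<in> J" using bi_mem(2)[OF I abcd(1) abcd(3), of e] bi_mem(2)[OF J abcd(2) abcd(4), of s] by auto
    then show "x \<in> setmul m I J" unfolding sm_iff using xx by blast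
  qed
  show ?thesis using ne 1 2 unfolding bi_ideal_def by blast
qed

lemma sq_bi:
  assumes ag: "AG_groupoid m" and li: "left_identity m e" and B: "bi_ideal m B"
  shows "bi_ideal m (setmul m B B)"
  using prod_bi[OF ag li B B] .

lemma mono_sm: "A \<subseteq> A' \<Longrightarrow> B \<subseteq> B' \<Longrightarrow> setmul m A B \<subseteq> setmul m A' B'"
  unfolding setmul_def by blast

theorem theorem1:
  fixes m :: "'a \<Rightarrow> 'a \<Rightarrow> 'a" and e :: 'a
  assumes "AG_groupoid m" and "left_identity m e"
  shows "(\<forall>B. bi_ideal m B \<longrightarrow> prime_bi_ideal m B) \<longleftrightarrow>
         ((\<forall>B. bi_ideal m B \<longrightarrow> idempotent_set m B) \<and>
          (\<forall>I J. bi_ideal m I \<longrightarrow> bi_ideal m J \<longrightarrow> I \<subseteq> J \<or> J \<subseteq> I))"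
proof
  assume P: "\<forall>B. bi_ideal m B \<longrightarrow> prime_bi_ideal m B"
  have pr: "\<And>B B1 B2. bi_ideal m B \<Longrightarrow> bi_ideal m B1 \<Longrightarrow> bi_ideal m B2 \<Longrightarrow>
      setmul m B1 B2 \<subseteq> B \<Longrightarrow> B1 \<subseteq> B \<or> B2 \<subseteq> B"
  proof -
    fix B B1 B2 assume h: "bi_ideal m B" "bi_ideal m B1" "bi_ideal m B2" "setmul m B1 B2 \<subseteq> B"
    have "prime_bi_ideal m B" using P h(1) by blast
    then have "\<forall>B1 B2. bi_ideal m B1 \<longrightarrow> bi_ideal m B2 \<longrightarrow> setmul m B1 B2 \<subseteq> B \<longrightarrow> B1 \<subseteq> B \<or> B2 \<subseteq> B"
      unfolding prime_bi_ideal_def by (rule conjunct2)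
    then show "B1 \<subseteq> B \<or> B2 \<subseteq> B" using h(2-4) by blast
  qed
  have idem: "\<And>B. bi_ideal m B \<Longrightarrow> setmul m B B = B"
  proof -
    fix B assume B: "bi_ideal m B"
    have "B \<subseteq> setmul m B B" using pr[OF sq_bi[OF assms B] B B] by blast
    moreover have "setmul m B B \<subseteq> B" using B unfolding bi_ideal_def by blast
    ultimately show "setmul m B B = B" by blast
  qed
  have key: "\<And>I J. bi_ideal m I \<Longrightarrow> bi_ideal m J \<Longrightarrow> I \<subseteq> setmul m I J \<Longrightarrow> I \<subseteq> J"
  proof
    fix I J x assume I: "bi_ideal m I" and J: "bi_ideal m J" and sub: "I \<subseteq> setmul m I J" and x: "x \<in> I"
    obtain a b where ab: "a \<in> I" "b \<in> J" "x = m a b" using subsetD[OF sub x] by (auto simp: sm_iff)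
    obtain a' b' where ab': "a' \<in> I" "b' \<in> J" "a = m a' b'" using subsetD[OF sub ab(1)] by (auto simp: sm_iff)
    obtain c d where cd: "c \<in> I" "d \<in> J" "a' = m c d" using subsetD[OF sub ab'(1)] by (auto simp: sm_iff)
    have "x = m (m a' b') b" using ab(3) ab'(3) by simp
    also have "\<dots> = m (m b b') a'" by (rule ag[OF assms(1)])
    also have "\<dots> = m (m b b') (m c d)" using cd(3) by simp
    also have "\<dots> = m (m d c) (m b' b)" by (rule paramedial[OF assms])
    finally have xe: "x = m (m d c) (m b' b)" .
    have "m (m d c) (m b' b) \<in> J" using bi_mem(2)[OF J cd(2) bi_mem(1)[OF J ab'(2) ab(2)]] .
    then show "x \<in> J" using xe by simp
  qed
  have tot: "\<forall>I J. bi_ideal m I \<longrightarrow> bi_ideal m J \<longrightarrow> I \<subseteq> J \<or> J \<subseteq> I"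
  proof (intro allI impI)
    fix I J assume I: "bi_ideal m I" and J: "bi_ideal m J"
    have c1: "I \<subseteq> setmul m I J \<or> J \<subseteq> setmul m I J"
      using pr[OF prod_bi[OF assms I J] I J] by blast
    have c2: "J \<subseteq> setmul m J I \<or> I \<subseteq> setmul m J I"
      using pr[OF prod_bi[OF assms J I] J I] by blast
    show "I \<subseteq> J \<or> J \<subseteq> I"
    proof (cases "I \<subseteq> setmul m I J")
      case True then show ?thesis using key[OF I J] key[OF J I] by blast
    next
      case F1: False
      show ?thesis
      proof (cases "J \<subseteq> setmul m J I")
        case True then show ?thesis using key[OF I J] key[OF J I] by blast
      next
        case False
        with F1 c1 c2 have j: "J \<subseteq> setmul m I J" and i: "I \<subseteq> setmul m J I" by blast+
        have "I = setmul m I I" using idem I by simp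
        also have "\<dots> \<subseteq> setmul m (setmul m J I) (setmul m J I)" using i mono_sm by blast
        also have "\<dots> \<subseteq> setmul m (setmul m I J) (setmul m I J)"
        proof
          fix x assume "x \<in> setmul m (setmul m J I) (setmul m J I)"
          then obtain p q where pq: "p \<in> setmul m J I" "q \<in> setmul m J I" "x = m p q"
            unfolding sm_iff[of x] by blast
          obtain a b where ab: "a \<in> J" "b \<in> I" "p = m a b" using pq(1) unfolding sm_iff by blast
          obtain c d where cd: "c \<in> J" "d \<in> I" "q = m c d" using pq(2) unfolding sm_iff by blast
          have abcd: "a \<in> J" "b \<in> I" "c \<in> J" "d \<in> I" "x = m (m a b) (m c d)"
            using ab cd pq(3) by simp_all
          then have "x = m (m d c) (m b a)" using paramedial[OF assms, of a b c d] by simp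
          moreover have "m d c \<in> setmul m I J" "m b a \<in> setmul m I J" using abcd unfolding sm_iff by blast+
          ultimately show "x \<in> setmul m (setmul m I J) (setmul m I J)" unfolding sm_iff[of x] by blast
        qed
        also have "\<dots> \<subseteq> setmul m J J"
        proof -
          have "setmul m I J \<subseteq> J"
          proof
            fix x assume "x \<in> setmul m I J"
            then obtain p q where pq: "p \<in> I" "q \<in> J" "x = m p q" unfolding sm_iff[of x] by blast
            obtain a b where ab: "a \<in> J" "b \<in> I" "p = m a b" using subsetD[OF i pq(1)] unfolding sm_iff by blast
            have "m (m a b) q \<in> J" by (rule bi_mem(2)[OF J ab(1) pq(2)])
            then show "x \<in> J" using ab(3) pq(3) by simp
          qed
          then show ?thesis using mono_sm by blast
        qed
        also have "\<dots> = J" using idem J by simp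
        finally show ?thesis by blast
      qed
    qed
  qed
  show "(\<forall>B. bi_ideal m B \<longrightarrow> idempotent_set m B) \<and>
          (\<forall>I J. bi_ideal m I \<longrightarrow> bi_ideal m J \<longrightarrow> I \<subseteq> J \<or> J \<subseteq> I)"
    using idem tot unfolding idempotent_set_def by blast
next
  assume R: "(\<forall>B. bi_ideal m B \<longrightarrow> idempotent_set m B) \<and>
          (\<forall>I J. bi_ideal m I \<longrightarrow> bi_ideal m J \<longrightarrow> I \<subseteq> J \<or> J \<subseteq> I)"
  have idm: "\<And>B. bi_ideal m B \<Longrightarrow> setmul m B B = B"
    using R unfolding idempotent_set_def by blast
  have tt: "\<And>I J. bi_ideal m I \<Longrightarrow> bi_ideal m J \<Longrightarrow> I \<subseteq> J \<or> J \<subseteq> I"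
    using R by blast
  have "prime_bi_ideal m B" if B: "bi_ideal m B" for B
    unfolding prime_bi_ideal_def
  proof (intro conjI allI impI)
    show "bi_ideal m B" by (rule B)
  next
    fix B1 B2 assume B1: "bi_ideal m B1" and B2: "bi_ideal m B2"
      and s: "setmul m B1 B2 \<subseteq> B"
    show "B1 \<subseteq> B \<or> B2 \<subseteq> B"
    proof (cases "B1 \<subseteq> B2")
      case True
      have "B1 = setmul m B1 B1" using idm[OF B1] by simp
      also have "\<dots> \<subseteq> setmul m B1 B2" using mono_sm[OF order_refl True] .
      finally show ?thesis using s by blast
    next
      case False
      then have sub: "B2 \<subseteq> B1" using tt[OF B1 B2] by blast
      have "B2 = setmul m B2 B2" using idm[OF B2] by simp
      also have "\<dots> \<subseteq> setmul m B1 B2" using mono_sm[OF sub order_refl] .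
      finally show ?thesis using s by blast
    qed
  qed
  then show "\<forall>B. bi_ideal m B \<longrightarrow> prime_bi_ideal m B" by blast
qed

end
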